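(* Let $r$ be a rational number with $0<r<1$ and $n\ge2$ an integer. The symmetrized subset $R$ of the free group $F(a,b)$ generated by $u_r^n$ satisfies the small cancellation conditions $C(4n)$ and $T(4)$.
   Context: Words $u_r$: for $r=q/p$ with $0<r\le1$, $p,q$ coprime positive integers, put $\epsilon_i=(-1)^{\lfloor iq/p\rfloor}$; if $p$ is odd, $u_r=a\hat u_r b^{(-1)^q}\hat u_r^{-1}$ with $\hat u_r=b^{\epsilon_1}a^{\epsilon_2}\cdots b^{\epsilon_{p-2}}a^{\epsilon_{p-1}}$; if $p$ is even, $u_r=a\hat u_r a^{-1}\hat u_r^{-1}$ with $\hat u_r=b^{\epsilon_1}a^{\epsilon_2}\cdots a^{\epsilon_{p-2}}b^{\epsilon_{p-1}}$. The symmetrized subset generated by a cyclically reduced word $u$ is the set of all cyclic permutations of $u$ and $u^{-1}$. A nonempty word $b$ is a piece if there exist distinct $w_1,w_2\in R$ with $w_1\equiv bc_1$, $w_2\equiv bc_2$ ($\equiv$ = letter-by-letter equality). Condition $C(p)$: if $w\in R$ is a product $w\equiv w_1\cdots w_t$ of $t$ pieces, then $t\ge p$. Condition $T(q)$: for $w_1,\dots,w_t\in R$ with no successive elements $w_i,w_{i+1}$ (indices mod $t$) an inverse pair, if $t<q$ then at least one of the products $w_1w_2,\dots,w_{t-1}w_t,w_tw_1$ is freely reduced without cancellation. *)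

theory Defs
  imports Complex_Main
begin

(* Free group F(a,b): a word is a list of letters; a letter is a generator with
   an exponent sign (True = exponent +1, False = exponent -1). *)
datatype gen = Ga | Gb

type_synonym letter = "gen \<times> bool"
type_synonym word = "letter list"

definition inv_letter :: "letter \<Rightarrow> letter" where
  "inv_letter x = (fst x, \<not> snd x)"

definition inv_word :: "word \<Rightarrow> word" where
  "inv_word w = rev (map inv_letter w)"

definition word_pow :: "word \<Rightarrow> nat \<Rightarrow> word" where
  "word_pow w n = concat (replicate n w)"

definition r_num :: "rat \<Rightarrow> int" where "r_num r = fst (quotient_of r)"
definition r_den :: "rat \<Rightarrow> int" where "r_den r = snd (quotient_of r)"

(* epsilon_i = (-1)^floor(i q / p); True encodes +1 *)
definition eps :: "rat \<Rightarrow> nat \<Rightarrow> bool" where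
  "eps r i = even ((int i * r_num r) div r_den r)"

(* hat u_r = b^{eps_1} a^{eps_2} b^{eps_3} ... (letters i = 1 .. p-1,
   b at odd positions, a at even positions), in both parity cases *)
definition u_hat :: "rat \<Rightarrow> word" where
  "u_hat r = map (\<lambda>i. (if odd i then Gb else Ga, eps r i)) [1..<nat (r_den r)]"

definition u_word :: "rat \<Rightarrow> word" where
  "u_word r =
     (if odd (r_den r)
      then [(Ga, True)] @ u_hat r @ [(Gb, even (r_num r))] @ inv_word (u_hat r)
      else [(Ga, True)] @ u_hat r @ [(Ga, False)] @ inv_word (u_hat r))"

definition symmetrized :: "word \<Rightarrow> word set" where
  "symmetrized u = {rotate k u | k. True} \<union> {rotate k (inv_word u) | k. True}"

definition piece :: "word set \<Rightarrow> word \<Rightarrow> bool" where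
  "piece R x \<longleftrightarrow> x \<noteq> [] \<and>
     (\<exists>w1 w2 c1 c2. w1 \<in> R \<and> w2 \<in> R \<and> w1 \<noteq> w2 \<and> w1 = x @ c1 \<and> w2 = x @ c2)"

definition C_cond :: "nat \<Rightarrow> word set \<Rightarrow> bool" where
  "C_cond p R \<longleftrightarrow>
     (\<forall>w \<in> R. \<forall>ps. w = concat ps \<and> (\<forall>x \<in> set ps. piece R x) \<longrightarrow> length ps \<ge> p)"

definition no_cancel :: "word \<Rightarrow> word \<Rightarrow> bool" where
  "no_cancel x y \<longleftrightarrow> x = [] \<or> y = [] \<or> last x \<noteq> inv_letter (hd y)"

(* T(q), with the standard range 3 <= t < q (Lyndon--Schupp) *)
definition T_cond :: "nat \<Rightarrow> word set \<Rightarrow> bool" where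
  "T_cond q R \<longleftrightarrow>
     (\<forall>ws :: word list. set ws \<subseteq> R \<and> 3 \<le> length ws \<and> length ws < q \<and>
        (\<forall>i < length ws. ws ! ((i + 1) mod length ws) \<noteq> inv_word (ws ! i))
      \<longrightarrow> (\<exists>i < length ws. no_cancel (ws ! i) (ws ! ((i + 1) mod length ws))))"

end

theory Submission
  imports Defs
begin

definition wl :: "nat \<Rightarrow> int \<Rightarrow> nat \<Rightarrow> int \<Rightarrow> nat \<Rightarrow> letter" where
  "wl P q e th k = (if even (k + e) then Ga else Gb, even ((int k * q + th) div int P))"

definition WW :: "nat \<Rightarrow> int \<Rightarrow> nat \<Rightarrow> nat \<Rightarrow> int \<Rightarrow> word" where
  "WW P q N e th = map (wl P q e th) [0..<N]"

definition marker :: "nat \<Rightarrow> int \<Rightarrow> int \<Rightarrow> nat \<Rightarrow> bool" where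
  "marker P q th k \<longleftrightarrow> (int k * q + th) mod int P = 0 \<or> (int k * q + th) mod int P = int P - 1"

lemma wl_shift: "wl P q e th (k + m) = wl P q (e + m) (th + int m * q) k"
  unfolding wl_def by (simp add: algebra_simps)

lemma divadd: "(0::int) < p \<Longrightarrow> (a + p * x) div p = a div p + x" by simp

lemma wl_period: assumes "P > 0" shows "wl P q e th (k + 2 * P * t) = wl P q e th k"
proof -
  have "int (k + 2 * P * t) * q + th = (int k * q + th) + int P * (2 * int t * q)"
    by (simp add: algebra_simps)
  then have "(int (k + 2 * P * t) * q + th) div int P = (int k * q + th) div int P + 2 * int t * q"
    using assms by (simp only: divadd)
  then show ?thesis unfolding wl_def by simp
qed

lemma wl_cong: assumes "P > 0" "even e1 = even e2" "th1 mod (2 * int P) = th2 mod (2 * int P)"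
  shows "wl P q e1 th1 = wl P q e2 th2"
proof
  fix k
  have "2 * int P dvd th2 - th1" using assms(3) mod_eq_dvd_iff by metis
  then obtain t where "th2 - th1 = 2 * int P * t" by (auto simp: dvd_def)
  then have t: "th2 = th1 + 2 * int P * t" by simp
  have "int k * q + th2 = (int k * q + th1) + int P * (2 * t)" using t by (simp add: algebra_simps)
  then have "(int k * q + th2) div int P = (int k * q + th1) div int P + 2 * t"
    using assms by (simp only: divadd)
  then show "wl P q e1 th1 k = wl P q e2 th2 k" unfolding wl_def using assms(2) by simp
qed

lemma fun_period_mult: fixes f :: "nat \<Rightarrow> 'a" and t :: nat assumes "\<And>k. f (k + N) = f k" shows "f (a + N * t) = f a"
proof (induction t)
  case 0 then show ?case by simp
next
  case (Suc t)
  have "f (a + N * Suc t) = f ((a + N * t) + N)" by (simp add: algebra_simps)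
  also have "\<dots> = f (a + N * t)" by (rule assms)
  finally show ?case using Suc by simp
qed

lemma fun_period_mod: fixes f :: "nat \<Rightarrow> 'a" assumes "\<And>k. f (k + N) = f k" shows "f (a mod N) = f a"
proof -
  have "f (a mod N + N * (a div N)) = f (a mod N)" by (rule fun_period_mult[of f N, OF assms])
  then show ?thesis by (metis mod_mult_div_eq)
qed

lemma map_period_rotate:
  assumes "\<And>k. f (k + N) = f k"
  shows "rotate m (map f [0..<N]) = map (\<lambda>k. f (k + m)) [0..<N]"
proof (rule nth_equalityI)
  show "length (rotate m (map f [0..<N])) = length (map (\<lambda>k. f (k + m)) [0..<N])" by simp
next
  fix i assume "i < length (rotate m (map f [0..<N]))"
  then have i: "i < N" by simp
  then have "rotate m (map f [0..<N]) ! i = map f [0..<N] ! ((m + i) mod N)"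
    by (simp add: nth_rotate)
  also have "\<dots> = f ((m + i) mod N)" using i by simp
  also have "\<dots> = f (i + m)" using fun_period_mod[of f N "m + i", OF assms] by (simp add: add.commute)
  finally show "rotate m (map f [0..<N]) ! i = map (\<lambda>k. f (k + m)) [0..<N] ! i" using i by simp
qed

lemma wl_periodN: assumes "P > 0" shows "wl P q e th (k + 2 * P * n) = wl P q e th k"
  using wl_period[OF assms] by simp

lemma rotate_WW: assumes "P > 0"
  shows "rotate m (WW P q (2 * P * n) e th) = WW P q (2 * P * n) (e + m) (th + int m * q)"
proof -
  have "rotate m (map (wl P q e th) [0..<2 * P * n]) = map (\<lambda>k. wl P q e th (k + m)) [0..<2 * P * n]"
    by (intro map_period_rotate wl_periodN assms)
  then show ?thesis by (simp add: wl_shift WW_def)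
qed

lemma negdiv: assumes "(0::int) < p" shows "(- x) div p = - ((x - 1) div p) - 1"
proof -
  define a where "a = (x - 1) div p"
  define b where "b = (x - 1) mod p"
  have x: "x - 1 = p * a + b" unfolding a_def b_def by simp
  have b: "0 \<le> b" "b < p" unfolding b_def using assms by auto
  have "- x = (p - 1 - b) + p * (- a - 1)" using x by (simp add: algebra_simps)
  then have "(- x) div p = (p - 1 - b) div p + (- a - 1)" using assms by (simp only: divadd)
  moreover have "(p - 1 - b) div p = 0" using b by simp
  ultimately show ?thesis unfolding a_def by simp
qed

lemma inv_WW: assumes "P > 0"
  shows "inv_word (WW P q (2 * P * n) 0 0) = WW P q (2 * P * n) 1 (q - 1)"
proof (rule nth_equalityI)
  show "length (inv_word (WW P q (2 * P * n) 0 0)) = length (WW P q (2 * P * n) 1 (q - 1))"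
    by (simp add: inv_word_def WW_def)
next
  fix k assume "k < length (inv_word (WW P q (2 * P * n) 0 0))"
  then have k: "k < 2 * P * n" by (simp add: inv_word_def WW_def)
  define N where "N = 2 * P * n"
  have kN: "k < N" using k N_def by simp
  have lhs: "inv_word (WW P q N 0 0) ! k = inv_letter (wl P q 0 0 (N - Suc k))"
    using kN by (simp add: inv_word_def WW_def rev_nth)
  have par: "even (N - Suc k) \<longleftrightarrow> even (k + 1)"
    using kN unfolding N_def by (simp add: even_diff_nat)  
  have "int (N - Suc k) * q = int P * (2 * int n * q) + (- ((int k + 1) * q))"
    using kN unfolding N_def by (simp add: of_nat_diff algebra_simps)
  then have "(int (N - Suc k) * q) div int P = (- ((int k + 1) * q)) div int P + 2 * int n * q"
    using assms divadd[of "int P" "- ((int k + 1) * q)" "2 * int n * q"] by (simp only: add.commute)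
  also have "\<dots> = - (((int k + 1) * q - 1) div int P) - 1 + 2 * int n * q"
    using assms negdiv[of "int P"] by simp
  finally have eq: "(int (N - Suc k) * q) div int P = - (((int k + 1) * q - 1) div int P) - 1 + 2 * (int n * q)"
    by simp
  have pr: "\<forall>A B M::int. A = - B - 1 + 2 * M \<longrightarrow> (odd A \<longleftrightarrow> even B)" by presburger
  have "((int k + 1) * q - 1) = int k * q + (q - 1)" by (simp add: algebra_simps)
  then have sg: "odd ((int (N - Suc k) * q) div int P) \<longleftrightarrow> even ((int k * q + (q - 1)) div int P)"
    using pr eq by metis
  show "inv_word (WW P q (2 * P * n) 0 0) ! k = WW P q (2 * P * n) 1 (q - 1) ! k"
    unfolding N_def[symmetric] lhs using kN par sg
    by (simp add: WW_def wl_def inv_letter_def)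
qed

lemma div_pred: assumes "(0::int) < p" "x mod p \<noteq> 0" shows "(x - 1) div p = x div p"
proof -
  define a where "a = x div p"
  define b where "b = x mod p"
  have x: "x - 1 = (b - 1) + p * a" unfolding a_def b_def by (simp add: algebra_simps)
  have b0: "0 \<le> b" "b < p" unfolding b_def using assms by auto
  have b: "1 \<le> b" "b < p" using b0 assms(2) unfolding b_def by auto
  have "(x - 1) div p = (b - 1) div p + a" using x assms by (simp only: divadd)
  moreover have "(b - 1) div p = 0" using b by simp
  ultimately show ?thesis unfolding a_def by simp
qed

lemma not_dvd_iq: assumes "coprime q (int P)" "0 < i" "i < P" shows "\<not> (int i * q) mod int P = 0"
proof
  assume "(int i * q) mod int P = 0"
  then have "int P dvd int i * q" by auto
  then have "int P dvd int i" using assms(1) coprime_dvd_mult_left_iff coprime_commute by metis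
  then have "P dvd i" by simp
  then show False using assms(2,3) by (auto dest: dvd_imp_le)
qed

lemma wl_refl: assumes "coprime q (int P)" "0 < i" "i < P"
  shows "wl P q 0 0 (P + i) = inv_letter (wl P q 0 0 (P - i))"
proof -
  have P: "(0::int) < int P" using assms by simp
  have par: "even (P + i) \<longleftrightarrow> even (P - i)" using assms by (simp add: even_diff_nat)
  have e1: "(int (P + i) * q) div int P = q + (int i * q) div int P"
    using P divadd[of "int P" "int i * q" q] by (simp add: algebra_simps)
  have "int (P - i) * q = - (int i * q) + int P * q" using assms by (simp add: of_nat_diff algebra_simps)
  then have "(int (P - i) * q) div int P = (- (int i * q)) div int P + q"
    using P divadd[of "int P" "- (int i * q)" q] by simp
  also have "\<dots> = - ((int i * q - 1) div int P) - 1 + q" using negdiv[OF P] by simp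
  also have "\<dots> = - ((int i * q) div int P) - 1 + q" using div_pred[OF P not_dvd_iq[OF assms]] by simp
  finally have e2: "(int (P - i) * q) div int P = - ((int i * q) div int P) - 1 + q" .
  have pr: "\<forall>A B::int. even (q + A) \<longleftrightarrow> \<not> even (- A - 1 + q)" by presburger
  show ?thesis unfolding wl_def inv_letter_def using par e1 e2 pr by simp
qed

lemma u_hat_eq: assumes "r_num r = q" "r_den r = int P"
  shows "u_hat r = map (wl P q 0 0) [1..<P]"
  unfolding u_hat_def wl_def eps_def using assms by (auto intro!: map_cong)

lemma u_word_eq: assumes "r_num r = q" "r_den r = int P" "2 \<le> P" "coprime q (int P)"
  shows "u_word r = WW P q (2 * P) 0 0"
proof -
  define f where "f = wl P q 0 0"
  have s1: "[0..<2 * P] = [0..<P] @ [P..<P + P]" by (metis mult_2 le_add1 upt_add_eq_append add_0)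
  have s2: "[0..<P] = 0 # [1..<P]" using assms(3) by (simp add: upt_conv_Cons)
  have s3: "[P..<P + P] = P # [Suc P..<2 * P]" using assms(3) by (simp add: upt_conv_Cons mult_2)
  have f0: "f 0 = (Ga, True)" unfolding f_def wl_def by simp
  have fP: "f P = (if even P then Ga else Gb, even q)" unfolding f_def wl_def using assms(3) by simp
  have inv: "inv_word (map f [1..<P]) = map f [Suc P..<2 * P]"
  proof (rule nth_equalityI)
    show "length (inv_word (map f [1..<P])) = length (map f [Suc P..<2 * P])"
      by (simp add: inv_word_def)
  next
    fix j assume "j < length (inv_word (map f [1..<P]))"
    then have j: "j < P - 1" by (simp add: inv_word_def)
    have jj: "Suc (P - Suc (Suc j)) = P - Suc j" using j by simp
    have "inv_word (map f [1..<P]) ! j = inv_letter (f (P - Suc j))"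
      using j jj by (simp add: inv_word_def rev_nth)
    also have "\<dots> = f (P + Suc j)" unfolding f_def
      by (rule wl_refl[OF assms(4), symmetric]) (use j in auto)
    finally show "inv_word (map f [1..<P]) ! j = map f [Suc P..<2 * P] ! j" using j by simp
  qed
  have mid: "(if odd (r_den r) then (Gb, even (r_num r)) else (Ga, False)) = f P"
  proof (cases "even P")
    case True
    then have "odd q" using assms(4) by (metis coprime_common_divisor even_of_nat dvd_refl odd_one)
    then show ?thesis using True fP assms(1,2) by simp
  qed (use fP assms(1,2) in simp)
  have "u_word r = [(Ga, True)] @ map f [1..<P] @ [f P] @ inv_word (map f [1..<P])"
    unfolding u_word_def u_hat_eq[OF assms(1,2), folded f_def] using mid by (auto split: if_splits)
  also have "\<dots> = map f [0..<2 * P]" unfolding s1 s2 s3 inv using f0 by simp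
  finally show ?thesis unfolding WW_def f_def .
qed

lemma word_pow_eq: assumes "P > 0"
  shows "word_pow (WW P q (2 * P) 0 0) n = WW P q (2 * P * n) 0 0"
proof (induction n)
  case 0 then show ?case by (simp add: word_pow_def WW_def)
next
  case (Suc n)
  have "word_pow (WW P q (2 * P) 0 0) (Suc n) = WW P q (2 * P) 0 0 @ WW P q (2 * P * n) 0 0"
    using Suc by (simp add: word_pow_def)
  also have "\<dots> = WW P q (2 * P * Suc n) 0 0"
  proof -
    have a: "[0..<2 * P * Suc n] = [0..<2 * P] @ [2 * P..<2 * P * n + 2 * P]"
      by (metis upt_add_eq_append le0 mult_Suc_right add.commute add_0)
    have b: "[2 * P..<2 * P * n + 2 * P] = map (\<lambda>i. i + 2 * P) [0..<2 * P * n]"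
      by (simp add: map_add_upt)
    have c: "map (wl P q 0 0) (map (\<lambda>i. i + 2 * P) [0..<2 * P * n]) = map (wl P q 0 0) [0..<2 * P * n]"
      using wl_period[OF assms, of q 0 0 _ 1] by simp
    show ?thesis unfolding WW_def a b map_append c by simp
  qed
  finally show ?case .
qed

lemma step01: assumes "(0::int) < p" "0 \<le> q" "q < p"
  shows "a div p \<le> (a + q) div p \<and> (a + q) div p \<le> a div p + 1"
proof
  show "a div p \<le> (a + q) div p" using assms by (simp add: zdiv_mono1)
  have "(a + q) div p \<le> (a + p) div p" by (rule zdiv_mono1) (use assms in auto)
  also have "\<dots> = a div p + 1" using assms by simp
  finally show "(a + q) div p \<le> a div p + 1" .
qed

lemma constD:
  assumes p: "(0::int) < p" "0 \<le> q" "q < p"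
    and ev: "\<forall>i<l. even ((int i * q + t1) div p) = even ((int i * q + t2) div p)"
  shows "i < l \<Longrightarrow> (int i * q + t1) div p - (int i * q + t2) div p = t1 div p - t2 div p"
proof (induction i)
  case 0 then show ?case by simp
next
  case (Suc i)
  then have il: "i < l" by simp
  have IH: "(int i * q + t1) div p - (int i * q + t2) div p = t1 div p - t2 div p" using Suc il by simp
  have a1: "int (Suc i) * q + t1 = (int i * q + t1) + q" by (simp add: algebra_simps)
  have a2: "int (Suc i) * q + t2 = (int i * q + t2) + q" by (simp add: algebra_simps)
  note b1 = step01[OF p, of "int i * q + t1"]
  note b2 = step01[OF p, of "int i * q + t2"]
  have e0: "even ((int i * q + t1) div p) = even ((int i * q + t2) div p)" using ev il by simp
  have e1: "even ((int (Suc i) * q + t1) div p) = even ((int (Suc i) * q + t2) div p)" using ev Suc.prems by blast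
  have pr: "\<forall>A0 A1 B0 B1::int. A0 \<le> A1 \<and> A1 \<le> A0 + 1 \<and> B0 \<le> B1 \<and> B1 \<le> B0 + 1 \<and>
      (even A0 = even B0) \<and> (even A1 = even B1) \<longrightarrow> A1 - B1 = A0 - B0" by presburger
  have "(int (Suc i) * q + t1) div p - (int (Suc i) * q + t2) div p
        = (int i * q + t1) div p - (int i * q + t2) div p"
    using pr b1 b2 e0 e1 unfolding a1 a2 by blast
  then show ?case using IH by simp
qed

lemma no_marker: assumes "(0::int) < p" "t1 < t2" "(a + t1) div p = (a + t2) div p"
  shows "(a + t1) mod p \<noteq> p - 1 \<and> (a + t2) mod p \<noteq> 0"
proof
  show "(a + t1) mod p \<noteq> p - 1"
  proof
    assume h: "(a + t1) mod p = p - 1"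
    have d: "p * ((a + t1) div p) + (a + t1) mod p = a + t1" by (rule mult_div_mod_eq)
    have "a + t1 + 1 = p * ((a + t1) div p + 1)" unfolding distrib_left mult_1_right using d h by linarith
    then have "(a + t1 + 1) div p = (a + t1) div p + 1" using assms(1) by simp
    moreover have "(a + t1 + 1) div p \<le> (a + t2) div p" using assms by (simp add: zdiv_mono1)
    ultimately show False using assms(3) by simp
  qed
  show "(a + t2) mod p \<noteq> 0"
  proof
    assume h: "(a + t2) mod p = 0"
    have d: "p * ((a + t2) div p) + (a + t2) mod p = a + t2" by (rule mult_div_mod_eq)
    have "a + t2 - 1 = (p - 1) + p * ((a + t2) div p - 1)" unfolding right_diff_distrib mult_1_right using d h by linarith
    then have "(a + t2 - 1) div p = (p - 1) div p + ((a + t2) div p - 1)" using assms(1) by (simp only: divadd)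
    then have "(a + t2 - 1) div p = (a + t2) div p - 1" using assms(1) by simp
    moreover have "(a + t1) div p \<le> (a + t2 - 1) div p" by (rule zdiv_mono1) (use assms in auto)
    ultimately show False using assms(3) by simp
  qed
qed

lemma exists_res: assumes "coprime q (int P)" "0 < P" "0 \<le> c" "c < int P"
  shows "\<exists>k. a \<le> k \<and> k < a + P \<and> (int k * q + th) mod int P = c"
proof -
  define p where "p = int P"
  have p0: "0 < p" using assms p_def by simp
  obtain u v where uv: "u * q + v * p = 1"
    using bezout_int[of q p] assms(1) unfolding p_def by (auto simp: coprime_iff_gcd_eq_1)
  define A where "A = c - th - int a * q"
  define t where "t = (A * u) mod p"
  have t0: "0 \<le> t" "t < p" unfolding t_def using p0 by auto
  have tdef: "t = A * u - p * (A * u div p)" unfolding t_def by (simp add: minus_mult_div_eq_mod)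
  define k where "k = a + nat t"
  have ik: "int k = int a + t" unfolding k_def using t0 by simp
  have "int k * q + th - c = p * (- A * v - (A * u div p) * q)"
    unfolding ik using tdef uv A_def by algebra
  then have "(int k * q + th) mod p = c mod p" by (simp add: mod_eq_dvd_iff)
  also have "\<dots> = c" using assms p_def by simp
  finally have m: "(int k * q + th) mod int P = c" unfolding p_def .
  have "a \<le> k" "k < a + P" using t0 unfolding k_def p_def by auto
  then show ?thesis using m by blast
qed

lemma between: assumes "coprime q (int P)" "0 < P" "k1 < k2"
  "(int k1 * q + th) mod int P = (int k2 * q + th) mod int P"
  "0 \<le> c" "c < int P" "c \<noteq> (int k1 * q + th) mod int P"
  shows "\<exists>k. k1 < k \<and> k < k2 \<and> (int k * q + th) mod int P = c"
proof -
  have "int P dvd (int k2 * q + th) - (int k1 * q + th)" using assms(4) mod_eq_dvd_iff by metis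
  then have "int P dvd int (k2 - k1) * q" using assms(3) by (simp add: of_nat_diff algebra_simps)
  then have "int P dvd int (k2 - k1)" using assms(1) coprime_dvd_mult_left_iff coprime_commute by metis
  then have "P dvd k2 - k1" by simp
  then have "P \<le> k2 - k1" using assms(3) by (auto dest: dvd_imp_le)
  obtain k where k: "k1 \<le> k" "k < k1 + P" "(int k * q + th) mod int P = c"
    using exists_res[OF assms(1,2,5,6)] by blast
  have "k \<noteq> k1" using k(3) assms(7) by auto
  then show ?thesis using k \<open>P \<le> k2 - k1\<close> by (intro exI[of _ k]) auto
qed

lemma key:
  assumes P2: "2 \<le> P" and q: "0 < q" "q < int P" and cop: "coprime q (int P)"
    and agree: "\<forall>i<l. wl P q e1 t1 i = wl P q e2 t2 i"
    and k: "k1 < k2" "k2 < l" and m1: "marker P q t2 k1" and m2: "marker P q t2 k2"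
  shows "wl P q e1 t1 = wl P q e2 t2"
proof -
  define p where "p = int P"
  have p0: "0 < p" using P2 p_def by simp
  have l0: "0 < l" using k by simp
  have "wl P q e1 t1 0 = wl P q e2 t2 0" using agree l0 by blast
  then have epar: "even e1 = even e2" unfolding wl_def by (auto split: if_splits)
  have ev: "\<forall>i<l. even ((int i * q + t1) div p) = even ((int i * q + t2) div p)"
  proof (intro allI impI)
    fix i assume "i < l"
    then have "wl P q e1 t1 i = wl P q e2 t2 i" using agree by blast
    then show "even ((int i * q + t1) div p) = even ((int i * q + t2) div p)"
      unfolding wl_def p_def by simp
  qed
  define D where "D = t1 div p - t2 div p"
  have cD: "\<And>i. i < l \<Longrightarrow> (int i * q + t1) div p - (int i * q + t2) div p = D"
    unfolding D_def using constD[OF p0 _ _ ev] q p_def by simp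
  have "even ((int 0 * q + t1) div p) = even ((int 0 * q + t2) div p)" using ev l0 by blast
  then have evD: "even D" using D_def by simp
  define t2' where "t2' = t2 + p * D"
  have div': "\<And>i. i < l \<Longrightarrow> (int i * q + t2') div p = (int i * q + t1) div p"
  proof -
    fix i assume "i < l"
    have "(int i * q + t2') div p = (int i * q + t2) div p + D"
      unfolding t2'_def using divadd[OF p0, of "int i * q + t2" D] by (simp add: add.assoc)
    then show "(int i * q + t2') div p = (int i * q + t1) div p" using cD[OF \<open>i < l\<close>] by simp
  qed
  have mod': "\<And>i. (int i * q + t2') mod p = (int i * q + t2) mod p"
    unfolding t2'_def by (simp add: add.assoc[symmetric])
  have Pp: "int P = p" using p_def by simp
  have res: "\<And>k. marker P q t2 k \<Longrightarrow> (int k * q + t2) mod p = 0 \<or> (int k * q + t2) mod p = p - 1"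
    unfolding marker_def Pp by simp
  have ne: "(0::int) \<noteq> p - 1" using P2 p_def by simp
  consider "t1 = t2'" | "t1 < t2'" | "t2' < t1" by linarith
  then show ?thesis
  proof cases
    case 1
    obtain m where "D = 2 * m" using evD by auto
    then have "t1 = t2 + 2 * int P * m" using 1 t2'_def p_def by simp
    then have "t1 mod (2 * int P) = t2 mod (2 * int P)" by simp
    then show ?thesis using wl_cong[of P e1 e2 t1 t2 q] P2 epar by simp
  next
    case 2
    have nz: "\<And>i. i < l \<Longrightarrow> (int i * q + t2) mod p \<noteq> 0"
      using no_marker[OF p0 2, of "int i * q" for i] div' mod' by metis
    have r1: "(int k1 * q + t2) mod p = p - 1" using res[OF m1] nz k by auto
    have r2: "(int k2 * q + t2) mod p = p - 1" using res[OF m2] nz k by auto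
    obtain kk where kk: "k1 < kk" "kk < k2" "(int kk * q + t2) mod int P = 0"
      using between[OF cop, of k1 k2 t2 0] P2 k r1 r2 ne p0 unfolding Pp by auto
    then show ?thesis using nz[of kk] k Pp by simp
  next
    case 3
    have nz: "\<And>i. i < l \<Longrightarrow> (int i * q + t2) mod p \<noteq> p - 1"
      using no_marker[OF p0 3, of "int i * q" for i] div' mod' by metis
    have r1: "(int k1 * q + t2) mod p = 0" using res[OF m1] nz k by auto
    have r2: "(int k2 * q + t2) mod p = 0" using res[OF m2] nz k by auto
    obtain kk where kk: "k1 < kk" "kk < k2" "(int kk * q + t2) mod int P = p - 1"
      using between[OF cop, of k1 k2 t2 "p - 1"] P2 k r1 r2 ne p0 unfolding Pp by auto
    then show ?thesis using nz[of kk] k Pp by simp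
  qed
qed

lemma count_markers: assumes cop: "coprime q (int P)" and P2: "2 \<le> P"
  shows "2 * m \<le> card {k. k < P * m \<and> marker P q th k}"
proof (induction m)
  case 0 then show ?case by simp
next
  case (Suc m)
  define A where "A = {k. k < P * m \<and> marker P q th k}"
  define B where "B = {k. P * m \<le> k \<and> k < P * m + P \<and> marker P q th k}"
  have P0: "0 < P" using P2 by simp
  obtain k0 where k0: "P * m \<le> k0" "k0 < P * m + P" "(int k0 * q + th) mod int P = 0"
    using exists_res[OF cop P0, of 0 "P * m" th] P0 by auto
  obtain k1 where k1: "P * m \<le> k1" "k1 < P * m + P" "(int k1 * q + th) mod int P = int P - 1"
    using exists_res[OF cop P0, of "int P - 1" "P * m" th] P0 by auto
  have "k0 \<noteq> k1" using k0(3) k1(3) P2 by auto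
  moreover have "{k0, k1} \<subseteq> B" using k0 k1 unfolding B_def marker_def by auto
  moreover have fB: "finite B" unfolding B_def by auto
  ultimately have cB: "2 \<le> card B" by (metis card_2_iff card_mono)
  have eq: "{k. k < P * Suc m \<and> marker P q th k} = A \<union> B" unfolding A_def B_def by auto
  have "A \<inter> B = {}" unfolding A_def B_def by auto
  moreover have "finite A" unfolding A_def by auto
  ultimately have "card (A \<union> B) = card A + card B" using fB by (simp add: card_Un_disjoint)
  then show ?case using Suc cB eq A_def by simp
qed

lemma R_form: assumes "P > 0" "w \<in> symmetrized (WW P q (2 * P * n) 0 0)"
  shows "\<exists>e th. w = WW P q (2 * P * n) e th"
  using assms unfolding symmetrized_def by (auto simp: inv_WW rotate_WW)

lemma R_ends: assumes "P > 0" "n > 0" "w \<in> symmetrized (WW P q (2 * P * n) 0 0)"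
  shows "w \<noteq> [] \<and> fst (last w) \<noteq> fst (hd w)"
proof -
  obtain e th where w: "w = WW P q (2 * P * n) e th" using R_form assms by blast
  have N: "0 < 2 * P * n" using assms by simp
  have "even (2 * P * n - 1 + e) \<longleftrightarrow> \<not> even (0 + e)" using N by (simp add: even_diff_nat)
  then show ?thesis using N unfolding w WW_def by (auto simp: last_map hd_map wl_def)
qed

lemma piece_markers:
  assumes P2: "2 \<le> P" and q: "0 < q" "q < int P" and cop: "coprime q (int P)" and n: "n > 0"
    and w: "w = WW P q (2 * P * n) e th"
    and pc: "piece (symmetrized (WW P q (2 * P * n) 0 0)) x"
    and xs: "x @ rest = drop s w"
    and k: "k1 < k2" "s \<le> k1" "k2 < s + length x"
    and m: "marker P q th k1" "marker P q th k2"
  shows False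
proof -
  define N where "N = 2 * P * n"
  define R where "R = symmetrized (WW P q N 0 0)"
  have P0: "0 < P" using P2 by simp
  obtain w1 w2 c1 c2 where ww: "w1 \<in> R" "w2 \<in> R" "w1 \<noteq> w2" "w1 = x @ c1" "w2 = x @ c2"
    using pc unfolding piece_def R_def N_def by blast
  obtain e1 t1 where w1: "w1 = WW P q N e1 t1" using R_form[OF P0] ww(1) unfolding R_def N_def by blast
  obtain e2 t2 where w2: "w2 = WW P q N e2 t2" using R_form[OF P0] ww(2) unfolding R_def N_def by blast
  define l where "l = length x"
  have lw: "length w = N" using w N_def by (simp add: WW_def)
  have sl: "s + l \<le> N" using arg_cong[OF xs, of length] lw k unfolding l_def by auto
  define ph where "ph = th + int s * q"
  have xi: "\<And>i. i < l \<Longrightarrow> x ! i = wl P q (e + s) ph i"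
  proof -
    fix i assume i: "i < l"
    have "x ! i = drop s w ! i" using xs i unfolding l_def by (metis nth_append)
    also have "\<dots> = w ! (s + i)" using sl i lw by simp
    also have "\<dots> = wl P q e th (i + s)" using sl i unfolding w N_def[symmetric] WW_def
      by (simp add: add.commute)
    finally show "x ! i = wl P q (e + s) ph i" unfolding ph_def by (simp add: wl_shift)
  qed
  have a1: "\<forall>i<l. wl P q e1 t1 i = wl P q (e + s) ph i"
  proof (intro allI impI)
    fix i assume i: "i < l"
    have "w1 ! i = x ! i" using ww(4) i unfolding l_def by (simp add: nth_append)
    moreover have "w1 ! i = wl P q e1 t1 i" using w1 i sl unfolding WW_def by simp
    ultimately show "wl P q e1 t1 i = wl P q (e + s) ph i" using xi i by simp
  qed
  have a2: "\<forall>i<l. wl P q e2 t2 i = wl P q (e + s) ph i"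
  proof (intro allI impI)
    fix i assume i: "i < l"
    have "w2 ! i = x ! i" using ww(5) i unfolding l_def by (simp add: nth_append)
    moreover have "w2 ! i = wl P q e2 t2 i" using w2 i sl unfolding WW_def by simp
    ultimately show "wl P q e2 t2 i = wl P q (e + s) ph i" using xi i by simp
  qed
  have mk: "\<And>k. s \<le> k \<Longrightarrow> marker P q th k \<Longrightarrow> marker P q ph (k - s)"
  proof -
    fix k assume "s \<le> k" "marker P q th k"
    moreover have "int (k - s) * q + ph = int k * q + th" using \<open>s \<le> k\<close> unfolding ph_def
      by (simp add: of_nat_diff algebra_simps)
    ultimately show "marker P q ph (k - s)" unfolding marker_def by simp
  qed
  have kk: "k1 - s < k2 - s" "k2 - s < l" using k unfolding l_def by auto
  have "wl P q e1 t1 = wl P q (e + s) ph"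
    using key[OF P2 q cop a1 kk mk[OF k(2) m(1)] mk[OF _ m(2)]] k by simp
  moreover have "wl P q e2 t2 = wl P q (e + s) ph"
    using key[OF P2 q cop a2 kk mk[OF k(2) m(1)] mk[OF _ m(2)]] k by simp
  ultimately have "w1 = w2" unfolding w1 w2 WW_def by simp
  then show False using ww(3) by simp
qed

lemma cover:
  assumes P2: "2 \<le> P" and q: "0 < q" "q < int P" and cop: "coprime q (int P)" and n: "n > 0"
    and w: "w = WW P q (2 * P * n) e th"
  shows "(\<forall>x\<in>set ps. piece (symmetrized (WW P q (2 * P * n) 0 0)) x) \<Longrightarrow> concat ps = drop s w \<Longrightarrow>
    card {k. s \<le> k \<and> k < 2 * P * n \<and> marker P q th k} \<le> length ps"
proof (induction ps arbitrary: s)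
  case Nil
  then have "length w \<le> s" by simp
  then have "{k. s \<le> k \<and> k < 2 * P * n \<and> marker P q th k} = {}" using w by (auto simp: WW_def)
  then show ?case by simp
next
  case (Cons x ps)
  define N where "N = 2 * P * n"
  define l where "l = length x"
  have pc: "piece (symmetrized (WW P q N 0 0)) x" using Cons.prems N_def by simp
  have xs: "x @ concat ps = drop s w" using Cons.prems by simp
  have "concat ps = drop l (drop s w)" using xs[symmetric] unfolding l_def by simp
  then have cs: "concat ps = drop (s + l) w" by (simp add: add.commute)
  have IH: "card {k. s + l \<le> k \<and> k < N \<and> marker P q th k} \<le> length ps"
    using Cons.IH[of "s + l"] Cons.prems cs N_def by simp
  define A where "A = {k. s \<le> k \<and> k < s + l \<and> k < N \<and> marker P q th k}"
  have fA: "finite A" unfolding A_def by auto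
  have "\<forall>a1\<in>A. \<forall>a2\<in>A. a1 = a2"
  proof (intro ballI, rule ccontr)
    fix a1 a2 assume h: "a1 \<in> A" "a2 \<in> A" "a1 \<noteq> a2"
    show False
    proof (cases "a1 < a2")
      case True
      show False using piece_markers[OF P2 q cop n w pc[unfolded N_def] xs True] h unfolding A_def l_def by auto
    next
      case False
      then have "a2 < a1" using h by simp
      show False using piece_markers[OF P2 q cop n w pc[unfolded N_def] xs \<open>a2 < a1\<close>] h unfolding A_def l_def by auto
    qed
  qed
  then have cA: "card A \<le> 1" using card_le_Suc0_iff_eq[OF fA] by simp
  have sub: "{k. s \<le> k \<and> k < N \<and> marker P q th k} \<subseteq> A \<union> {k. s + l \<le> k \<and> k < N \<and> marker P q th k}"
    unfolding A_def by auto
  have "card {k. s \<le> k \<and> k < N \<and> marker P q th k} \<le> card (A \<union> {k. s + l \<le> k \<and> k < N \<and> marker P q th k})"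
    by (rule card_mono[OF _ sub]) (auto simp: A_def)
  also have "\<dots> \<le> card A + card {k. s + l \<le> k \<and> k < N \<and> marker P q th k}" by (rule card_Un_le)
  finally show ?case using cA IH N_def by simp
qed

lemma T_part: assumes "P > 0" "n > 0"
  shows "T_cond 4 (symmetrized (WW P q (2 * P * n) 0 0))"
  unfolding T_cond_def
proof (intro allI impI)
  fix ws :: "word list"
  assume h: "set ws \<subseteq> symmetrized (WW P q (2 * P * n) 0 0) \<and> 3 \<le> length ws \<and> length ws < 4 \<and>
    (\<forall>i<length ws. ws ! ((i + 1) mod length ws) \<noteq> inv_word (ws ! i))"
  then have l3: "length ws = 3" by simp
  have E: "\<And>i. i < 3 \<Longrightarrow> ws ! i \<noteq> [] \<and> fst (last (ws ! i)) \<noteq> fst (hd (ws ! i))"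
    using R_ends[OF assms] h l3 by (metis nth_mem subsetD)
  show "\<exists>i<length ws. no_cancel (ws ! i) (ws ! ((i + 1) mod length ws))"
  proof (rule ccontr)
    assume "\<not> ?thesis"
    then have nc: "\<And>i. i < 3 \<Longrightarrow> \<not> no_cancel (ws ! i) (ws ! ((i + 1) mod 3))" using l3 by auto
    have f: "\<And>i. i < 3 \<Longrightarrow> fst (last (ws ! i)) = fst (hd (ws ! ((i + 1) mod 3)))"
      using nc unfolding no_cancel_def inv_letter_def by (metis fst_conv)
    have d0: "fst (hd (ws ! 1)) \<noteq> fst (hd (ws ! 0))" using f[of 0] E[of 0] by simp
    have d1: "fst (hd (ws ! 2)) \<noteq> fst (hd (ws ! 1))" using f[of 1] E[of 1] by (simp add: numeral_2_eq_2)
    have d2: "fst (hd (ws ! 0)) \<noteq> fst (hd (ws ! 2))" using f[of 2] E[of 2] by (simp add: numeral_2_eq_2)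
    show False using d0 d1 d2 by (metis gen.exhaust)
  qed
qed

theorem mainTheorem6:
  fixes r :: rat and n :: nat
  assumes "0 < r" and "r < 1" and "2 \<le> n"
  shows "C_cond (4 * n) (symmetrized (word_pow (u_word r) n))
       \<and> T_cond 4 (symmetrized (word_pow (u_word r) n))"
proof -
  obtain q p where qp: "quotient_of r = (q, p)" by (cases "quotient_of r") auto
  have p0: "0 < p" using quotient_of_denom_pos[OF qp] .
  have cop: "coprime q p" using quotient_of_coprime[OF qp] .
  have rdiv: "r = of_int q / of_int p" using quotient_of_div[OF qp] .
  have pr: "(0::rat) < of_int p" using p0 by simp
  have q0: "0 < q"
  proof -
    have "0 < of_int q / (of_int p :: rat)" using assms(1) rdiv by simp
    then have "(0::rat) < of_int q" using pr by (simp add: zero_less_divide_iff)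
    then show ?thesis by simp
  qed
  have qlt: "q < p"
  proof -
    have "of_int q / (of_int p :: rat) < 1" using assms(2) rdiv by simp
    then have "(of_int q :: rat) < of_int p" using pr by (simp add: divide_less_eq)
    then show ?thesis by simp
  qed
  define P where "P = nat p"
  have pP: "p = int P" using p0 P_def by simp
  have P2: "2 \<le> P" using q0 qlt pP by linarith
  have P0: "0 < P" using P2 by simp
  have n0: "0 < n" using assms(3) by simp
  have rn: "r_num r = q" "r_den r = int P" using qp pP unfolding r_num_def r_den_def by auto
  have cop': "coprime q (int P)" using cop pP by simp
  have q': "0 < q" "q < int P" using q0 qlt pP by auto
  have W: "word_pow (u_word r) n = WW P q (2 * P * n) 0 0"
    using u_word_eq[OF rn P2 cop'] word_pow_eq[OF P0] by simp
  define R where "R = symmetrized (WW P q (2 * P * n) 0 0)"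
  have C: "C_cond (4 * n) R"
    unfolding C_cond_def
  proof (intro ballI allI impI)
    fix w ps assume w: "w \<in> R" and h: "w = concat ps \<and> (\<forall>x\<in>set ps. piece R x)"
    obtain e th where we: "w = WW P q (2 * P * n) e th" using R_form[OF P0] w unfolding R_def by blast
    have "card {k. 0 \<le> k \<and> k < 2 * P * n \<and> marker P q th k} \<le> length ps"
      using cover[OF P2 q' cop' n0 we, of ps 0] h unfolding R_def by simp
    moreover have "2 * (2 * n) \<le> card {k. k < P * (2 * n) \<and> marker P q th k}"
      by (rule count_markers[OF cop' P2])
    moreover have "P * (2 * n) = 2 * P * n" by simp
    ultimately show "4 * n \<le> length ps" by simp
  qed
  have T: "T_cond 4 R" unfolding R_def by (rule T_part[OF P0 n0])
  show ?thesis using C T W unfolding R_def by simp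
qed

end
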